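(* Let $X\in G$ with $X\in USS(X)$ and $\ell(X)>0$, and let $s$ be a minimal simple element for $X$ such that $\varphi(X)s$ is left weighted (in left normal form as written). Then $s\preccurlyeq\iota(X)$.
   Context: $G$ is a Garside group: it has a lattice order $\preccurlyeq$ invariant under left multiplication ($a\preccurlyeq b$ iff $a^{-1}b\in P$, where $P=\{p\in G:1\preccurlyeq p\}$), with meet $\wedge$; there is a Garside element $\Delta\in P$ such that $[1,\Delta]$ is finite and generates $G$ and $\Delta^{-1}P\Delta=P$; and $P$ is atomic. Elements of $[1,\Delta]$ are simple. $\tau(x)=\Delta^{-1}x\Delta$; $\partial(u)=u^{-1}\Delta$ for simple $u$; $X^a=a^{-1}Xa$. Left normal form $X=\Delta^p x_1\cdots x_r$: $p$ maximal with $\Delta^p\preccurlyeq X$, each $x_i\neq 1$ the maximal simple prefix of $x_i\cdots x_r$; $\inf X=p$, $\sup X=p+r$, $\ell(X)=r$. Simple $a,b$ are left weighted if $ab$ is in left normal form as written. $\iota(X)=\tau^{-p}(x_1)$, $\varphi(X)=x_r$ for $r>0$. $\mathbf c(X)=X^{\iota(X)}$. $SSS(X)$: conjugates of $X$ of maximal infimum and minimal supremum; $USS(X)$: those $Y\in SSS(X)$ with $\mathbf c^m(Y)=Y$ for some $m>0$. A minimal simple element for $Y\in USS(X)$ is a simple $s\neq1$ with $Y^s\in USS(X)$ such that no prefix $t\ne1$, $t\neq s$ of $s$ has $Y^t\in USS(X)$. *)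

theory Defs
  imports "HOL-Algebra.Generated_Groups"
begin

definition gprec :: "('a,'b) monoid_scheme \<Rightarrow> 'a set \<Rightarrow> 'a \<Rightarrow> 'a \<Rightarrow> bool" where
  "gprec G P a b \<longleftrightarrow> a \<in> carrier G \<and> b \<in> carrier G \<and> inv\<^bsub>G\<^esub> a \<otimes>\<^bsub>G\<^esub> b \<in> P"

definition lprod :: "('a,'b) monoid_scheme \<Rightarrow> 'a list \<Rightarrow> 'a" where
  "lprod G xs = foldr (\<lambda>x y. x \<otimes>\<^bsub>G\<^esub> y) xs \<one>\<^bsub>G\<^esub>"

definition simple :: "('a,'b) monoid_scheme \<Rightarrow> 'a set \<Rightarrow> 'a \<Rightarrow> 'a \<Rightarrow> bool" where
  "simple G P D u \<longleftrightarrow> gprec G P \<one>\<^bsub>G\<^esub> u \<and> gprec G P u D"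

definition garside :: "('a,'b) monoid_scheme \<Rightarrow> 'a set \<Rightarrow> 'a \<Rightarrow> bool" where
  "garside G P D \<longleftrightarrow>
     group G \<and> P \<subseteq> carrier G \<and>
     \<comment> \<open>the relation is a partial order on G\<close>
     (\<forall>a\<in>carrier G. gprec G P a a) \<and>
     (\<forall>a b c. gprec G P a b \<and> gprec G P b c \<longrightarrow> gprec G P a c) \<and>
     (\<forall>a b. gprec G P a b \<and> gprec G P b a \<longrightarrow> a = b) \<and>
     \<comment> \<open>which is a lattice (meets and joins exist)\<close>
     (\<forall>a\<in>carrier G. \<forall>b\<in>carrier G. \<exists>m. gprec G P m a \<and> gprec G P m b \<and>
          (\<forall>c. gprec G P c a \<and> gprec G P c b \<longrightarrow> gprec G P c m)) \<and>
     (\<forall>a\<in>carrier G. \<forall>b\<in>carrier G. \<exists>j. gprec G P a j \<and> gprec G P b j \<and>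
          (\<forall>c. gprec G P a c \<and> gprec G P b c \<longrightarrow> gprec G P j c)) \<and>
     \<comment> \<open>Garside element\<close>
     D \<in> P \<and>
     finite {u. simple G P D u} \<and>
     generate G {u. simple G P D u} = carrier G \<and>
     {inv\<^bsub>G\<^esub> D \<otimes>\<^bsub>G\<^esub> p \<otimes>\<^bsub>G\<^esub> D | p. p \<in> P} = P \<and>
     \<comment> \<open>P is atomic\<close>
     (\<forall>x\<in>P. \<exists>N::nat. \<forall>xs. set xs \<subseteq> P - {\<one>\<^bsub>G\<^esub>} \<and> lprod G xs = x \<longrightarrow> length xs \<le> N)"

definition tau_pow :: "('a,'b) monoid_scheme \<Rightarrow> 'a \<Rightarrow> int \<Rightarrow> 'a \<Rightarrow> 'a" where
  "tau_pow G D k x = inv\<^bsub>G\<^esub> (D [^]\<^bsub>G\<^esub> k) \<otimes>\<^bsub>G\<^esub> x \<otimes>\<^bsub>G\<^esub> (D [^]\<^bsub>G\<^esub> k)"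

definition conj :: "('a,'b) monoid_scheme \<Rightarrow> 'a \<Rightarrow> 'a \<Rightarrow> 'a" where
  "conj G X a = inv\<^bsub>G\<^esub> a \<otimes>\<^bsub>G\<^esub> X \<otimes>\<^bsub>G\<^esub> a"

definition lnf :: "('a,'b) monoid_scheme \<Rightarrow> 'a set \<Rightarrow> 'a \<Rightarrow> 'a \<Rightarrow> int \<Rightarrow> 'a list \<Rightarrow> bool" where
  "lnf G P D X p xs \<longleftrightarrow>
     X = (D [^]\<^bsub>G\<^esub> p) \<otimes>\<^bsub>G\<^esub> lprod G xs \<and>
     gprec G P (D [^]\<^bsub>G\<^esub> p) X \<and>
     (\<forall>q::int. gprec G P (D [^]\<^bsub>G\<^esub> q) X \<longrightarrow> q \<le> p) \<and>
     (\<forall>i<length xs. xs ! i \<noteq> \<one>\<^bsub>G\<^esub> \<and>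
        simple G P D (xs ! i) \<and> gprec G P (xs ! i) (lprod G (drop i xs)) \<and>
        (\<forall>u. simple G P D u \<and> gprec G P u (lprod G (drop i xs)) \<longrightarrow> gprec G P u (xs ! i)))"

definition nf :: "('a,'b) monoid_scheme \<Rightarrow> 'a set \<Rightarrow> 'a \<Rightarrow> 'a \<Rightarrow> int \<times> 'a list" where
  "nf G P D X = (THE (p, xs). lnf G P D X p xs)"

definition ginf :: "('a,'b) monoid_scheme \<Rightarrow> 'a set \<Rightarrow> 'a \<Rightarrow> 'a \<Rightarrow> int" where
  "ginf G P D X = fst (nf G P D X)"

definition clen :: "('a,'b) monoid_scheme \<Rightarrow> 'a set \<Rightarrow> 'a \<Rightarrow> 'a \<Rightarrow> nat" where
  "clen G P D X = length (snd (nf G P D X))"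

definition gsup :: "('a,'b) monoid_scheme \<Rightarrow> 'a set \<Rightarrow> 'a \<Rightarrow> 'a \<Rightarrow> int" where
  "gsup G P D X = ginf G P D X + int (clen G P D X)"

definition iota :: "('a,'b) monoid_scheme \<Rightarrow> 'a set \<Rightarrow> 'a \<Rightarrow> 'a \<Rightarrow> 'a" where
  "iota G P D X = tau_pow G D (- ginf G P D X) (hd (snd (nf G P D X)))"

definition phi :: "('a,'b) monoid_scheme \<Rightarrow> 'a set \<Rightarrow> 'a \<Rightarrow> 'a \<Rightarrow> 'a" where
  "phi G P D X = last (snd (nf G P D X))"

definition cycling :: "('a,'b) monoid_scheme \<Rightarrow> 'a set \<Rightarrow> 'a \<Rightarrow> 'a \<Rightarrow> 'a" where
  "cycling G P D X = conj G X (iota G P D X)"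

definition left_weighted :: "('a,'b) monoid_scheme \<Rightarrow> 'a set \<Rightarrow> 'a \<Rightarrow> 'a \<Rightarrow> 'a \<Rightarrow> bool" where
  "left_weighted G P D a b \<longleftrightarrow> simple G P D a \<and> simple G P D b \<and>
      lnf G P D (a \<otimes>\<^bsub>G\<^esub> b) 0 [a, b]"

definition conj_class :: "('a,'b) monoid_scheme \<Rightarrow> 'a \<Rightarrow> 'a set" where
  "conj_class G X = {conj G X a | a. a \<in> carrier G}"

definition SSS :: "('a,'b) monoid_scheme \<Rightarrow> 'a set \<Rightarrow> 'a \<Rightarrow> 'a \<Rightarrow> 'a set" where
  "SSS G P D X = {Y \<in> conj_class G X. \<forall>Z \<in> conj_class G X.
       ginf G P D Z \<le> ginf G P D Y \<and> gsup G P D Y \<le> gsup G P D Z}"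

definition USS :: "('a,'b) monoid_scheme \<Rightarrow> 'a set \<Rightarrow> 'a \<Rightarrow> 'a \<Rightarrow> 'a set" where
  "USS G P D X = {Y \<in> SSS G P D X. \<exists>m>0. (cycling G P D ^^ m) Y = Y}"

definition minimal_simple :: "('a,'b) monoid_scheme \<Rightarrow> 'a set \<Rightarrow> 'a \<Rightarrow> 'a \<Rightarrow> 'a \<Rightarrow> 'a \<Rightarrow> bool" where
  "minimal_simple G P D X Y s \<longleftrightarrow>
     simple G P D s \<and> s \<noteq> \<one>\<^bsub>G\<^esub> \<and> conj G Y s \<in> USS G P D X \<and>
     (\<forall>t. gprec G P \<one>\<^bsub>G\<^esub> t \<and> gprec G P t s \<and> t \<noteq> \<one>\<^bsub>G\<^esub> \<and> t \<noteq> s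
          \<longrightarrow> conj G Y t \<notin> USS G P D X)"

end

theory Submission imports Defs begin

locale GS = group G for G :: "('a,'b) monoid_scheme" +
  fixes P :: "'a set" and D :: 'a
  assumes gar: "garside G P D"
begin

abbreviation mul (infixl "\<cdot>" 70) where "a \<cdot> b \<equiv> a \<otimes>\<^bsub>G\<^esub> b"
abbreviation iv where "iv a \<equiv> inv\<^bsub>G\<^esub> a"
abbreviation e where "e \<equiv> \<one>\<^bsub>G\<^esub>"
abbreviation le (infix "\<preceq>" 50) where "a \<preceq> b \<equiv> gprec G P a b"
abbreviation Dn where "Dn n \<equiv> D [^]\<^bsub>G\<^esub> (n::nat)"
abbreviation Dk where "Dk k \<equiv> D [^]\<^bsub>G\<^esub> (k::int)"
abbreviation smp where "smp u \<equiv> simple G P D u"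

lemma PG: "P \<subseteq> carrier G" using gar unfolding garside_def by (elim conjE) assumption
lemma g_refl: "\<forall>a\<in>carrier G. a \<preceq> a" using gar unfolding garside_def by (elim conjE) assumption
lemma g_trans: "\<forall>a b c. a \<preceq> b \<and> b \<preceq> c \<longrightarrow> a \<preceq> c" using gar unfolding garside_def by (elim conjE) assumption
lemma g_antisym: "\<forall>a b. a \<preceq> b \<and> b \<preceq> a \<longrightarrow> a = b" using gar unfolding garside_def by (elim conjE) assumption
lemma g_meet: "\<forall>a\<in>carrier G. \<forall>b\<in>carrier G. \<exists>m. m \<preceq> a \<and> m \<preceq> b \<and>
          (\<forall>c. c \<preceq> a \<and> c \<preceq> b \<longrightarrow> c \<preceq> m)" using gar unfolding garside_def by (elim conjE) assumption
lemma DP: "D \<in> P" using gar unfolding garside_def by (elim conjE) assumption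
lemma gen: "generate G {u. smp u} = carrier G" using gar unfolding garside_def by (elim conjE) assumption
lemma conjset: "{iv D \<cdot> p \<cdot> D | p. p \<in> P} = P" using gar unfolding garside_def by (elim conjE) assumption
lemma g_atomic: "\<forall>x\<in>P. \<exists>N::nat. \<forall>xs. set xs \<subseteq> P - {e} \<and> lprod G xs = x \<longrightarrow> length xs \<le> N"
  using gar unfolding garside_def by (elim conjE) assumption

lemma le_refl: "a \<in> carrier G \<Longrightarrow> a \<preceq> a" using g_refl by blast
lemma le_trans: "a \<preceq> b \<Longrightarrow> b \<preceq> c \<Longrightarrow> a \<preceq> c" using g_trans by blast
lemma le_antisym: "a \<preceq> b \<Longrightarrow> b \<preceq> a \<Longrightarrow> a = b" using g_antisym by blast
lemma meet_ex: "a \<in> carrier G \<Longrightarrow> b \<in> carrier G \<Longrightarrow>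
   \<exists>m. m \<preceq> a \<and> m \<preceq> b \<and> (\<forall>c. c \<preceq> a \<and> c \<preceq> b \<longrightarrow> c \<preceq> m)"
  using g_meet by blast
lemma atomic: "x \<in> P \<Longrightarrow> \<exists>N::nat. \<forall>xs. set xs \<subseteq> P - {e} \<and> lprod G xs = x \<longrightarrow> length xs \<le> N"
  using g_atomic by blast

lemma cancel1[simp]: "x \<in> carrier G \<Longrightarrow> y \<in> carrier G \<Longrightarrow> iv x \<cdot> (x \<cdot> y) = y"
  by (simp add: m_assoc[symmetric])
lemma cancel2[simp]: "x \<in> carrier G \<Longrightarrow> y \<in> carrier G \<Longrightarrow> x \<cdot> (iv x \<cdot> y) = y"
  by (simp add: m_assoc[symmetric])
lemma cancel3[simp]: "x \<in> carrier G \<Longrightarrow> y \<in> carrier G \<Longrightarrow> y \<cdot> iv x \<cdot> x = y"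
  by (simp add: m_assoc)
lemma cancel4[simp]: "x \<in> carrier G \<Longrightarrow> y \<in> carrier G \<Longrightarrow> y \<cdot> x \<cdot> iv x = y"
  by (simp add: m_assoc)

lemma DG[simp]: "D \<in> carrier G" using DP PG by blast
lemma PGe: "x \<in> P \<Longrightarrow> x \<in> carrier G" using PG by blast

lemma le_def: "a \<preceq> b \<longleftrightarrow> a \<in> carrier G \<and> b \<in> carrier G \<and> iv a \<cdot> b \<in> P"
  by (simp add: gprec_def)

lemma leG: "a \<preceq> b \<Longrightarrow> a \<in> carrier G \<and> b \<in> carrier G" by (simp add: le_def)

lemma one_P: "e \<in> P" using le_refl[of "e"] by (simp add: le_def)

lemma P_iff: "e \<preceq> a \<longleftrightarrow> a \<in> P" using PG by (auto simp: le_def)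

lemma le_mult_P: "b \<in> carrier G \<Longrightarrow> a \<in> P \<Longrightarrow> b \<preceq> b \<cdot> a"
  using PGe[of a] by (simp add: le_def m_assoc[symmetric])

lemma P_mult: "a \<in> P \<Longrightarrow> b \<in> P \<Longrightarrow> a \<cdot> b \<in> P"
  using le_trans[of "e" a "a \<cdot> b"] le_mult_P[of a b] P_iff PGe by auto

lemma le_lmult: "a \<preceq> b \<Longrightarrow> g \<in> carrier G \<Longrightarrow> g \<cdot> a \<preceq> g \<cdot> b"
proof -
  assume a: "a \<preceq> b" and g: "g \<in> carrier G"
  then have ab: "a \<in> carrier G" "b \<in> carrier G" by (auto simp: le_def)
  have "iv (g \<cdot> a) \<cdot> (g \<cdot> b) = iv a \<cdot> (iv g \<cdot> g) \<cdot> b"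
    using ab g by (simp add: inv_mult_group m_assoc)
  also have "\<dots> = iv a \<cdot> b" using ab g by simp
  finally show ?thesis using a ab g by (simp add: le_def)
qed

lemma le_lmult_iff: "a \<in> carrier G \<Longrightarrow> b \<in> carrier G \<Longrightarrow> g \<in> carrier G \<Longrightarrow> g \<cdot> a \<preceq> g \<cdot> b \<longleftrightarrow> a \<preceq> b"
proof
  assume "g \<cdot> a \<preceq> g \<cdot> b" "a \<in> carrier G" "b \<in> carrier G" "g \<in> carrier G"
  then show "a \<preceq> b" using le_lmult[of "g \<cdot> a" "g \<cdot> b" "iv g"] by simp
qed (simp add: le_lmult)

lemma P_unit: "a \<in> P \<Longrightarrow> iv a \<in> P \<Longrightarrow> a = e"
  using le_antisym[of a "e"] PGe[of a] by (auto simp: le_def)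

lemma le_one_P: "a \<in> P \<Longrightarrow> a \<preceq> e \<Longrightarrow> a = e"
  using P_unit PGe by (auto simp: le_def)

lemma simpleP: "smp u \<Longrightarrow> u \<in> P" by (simp add: simple_def P_iff)
lemma simpleD: "smp u \<Longrightarrow> u \<preceq> D" by (simp add: simple_def)
lemma simpleI: "u \<in> P \<Longrightarrow> u \<preceq> D \<Longrightarrow> smp u" by (simp add: simple_def P_iff)

lemma conjD1: "x \<in> P \<Longrightarrow> iv D \<cdot> x \<cdot> D \<in> P"
  using conjset by blast
lemma conjD2: "x \<in> P \<Longrightarrow> D \<cdot> x \<cdot> iv D \<in> P"
proof -
  assume "x \<in> P"
  then obtain p where p: "p \<in> P" "x = iv D \<cdot> p \<cdot> D" using conjset by blast
  then have "D \<cdot> x \<cdot> iv D = p" using PGe[of p]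
    by (simp add: m_assoc)
  then show ?thesis using p by simp
qed

lemma conjDn: "x \<in> P \<Longrightarrow> iv (Dn n) \<cdot> x \<cdot> Dn n \<in> P \<and> Dn n \<cdot> x \<cdot> iv (Dn n) \<in> P"
proof (induction n arbitrary: x)
  case 0 then show ?case by (simp add: PGe)
next
  case (Suc n)
  have x: "x \<in> carrier G" using Suc PGe by auto
  have "iv (Dn (Suc n)) \<cdot> x \<cdot> Dn (Suc n) = iv D \<cdot> (iv (Dn n) \<cdot> x \<cdot> Dn n) \<cdot> D"
    using x by (simp add: inv_mult_group m_assoc)
  moreover have "Dn (Suc n) \<cdot> x \<cdot> iv (Dn (Suc n)) = Dn n \<cdot> (D \<cdot> x \<cdot> iv D) \<cdot> iv (Dn n)"
    using x by (simp add: inv_mult_group m_assoc)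
  ultimately show ?case using Suc conjD1 conjD2 by simp
qed

lemma Dk_nonneg: "\<not> k < 0 \<Longrightarrow> Dk k = Dn (nat k)" by (rule pow_nat[symmetric]) simp
lemma Dk_neg: "k < 0 \<Longrightarrow> Dk k = iv (Dn (nat (-k)))"
proof -
  assume "k < 0"
  have "Dn (nat (-k)) = Dk (-k)" by (rule pow_nat) (use \<open>k < 0\<close> in simp)
  moreover have "Dk k = iv (Dk (-k))" using int_pow_neg[of D "-k"] by simp
  ultimately show ?thesis by simp
qed

lemma conjDk: "x \<in> P \<Longrightarrow> iv (Dk k) \<cdot> x \<cdot> Dk k \<in> P"
proof (cases "k < 0")
  case True
  assume x: "x \<in> P"
  have "iv (iv (Dn (nat (-k)))) = Dn (nat (-k))" by simp
  then show ?thesis using conjDn[OF x, of "nat (-k)"] Dk_neg[OF True] by simp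
next
  case False
  assume x: "x \<in> P"
  show ?thesis using conjDn[OF x, of "nat k"] Dk_nonneg[OF False] by simp
qed

lemma Dpow_P: "Dn n \<in> P"
  by (induction n) (auto simp: one_P P_mult DP)


lemma lcancel: "x \<in> carrier G \<Longrightarrow> a \<in> carrier G \<Longrightarrow> b \<in> carrier G \<Longrightarrow> x \<cdot> a = x \<cdot> b \<Longrightarrow> a = b"
proof -
  assume c: "x \<in> carrier G" "a \<in> carrier G" "b \<in> carrier G" and e: "x \<cdot> a = x \<cdot> b"
  have "iv x \<cdot> (x \<cdot> a) = iv x \<cdot> (x \<cdot> b)" using e by simp
  then show "a = b" using c by simp
qed

lemma bounds: "g \<in> carrier G \<Longrightarrow> \<exists>n. Dn n \<cdot> g \<in> P \<and> iv g \<cdot> Dn n \<in> P"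
proof -
  assume "g \<in> carrier G"
  then have "g \<in> generate G {u. smp u}" using gen by simp
  then show ?thesis
  proof (induction rule: generate.induct)
    case one
    show ?case by (rule exI[of _ 0]) (simp add: one_P)
  next
    case (incl h)
    then have h: "h \<in> P" "iv h \<cdot> D \<in> P" using simpleP simpleD by (auto simp: le_def)
    then show ?case using P_mult[OF DP h(1)] PGe by (intro exI[of _ 1]) simp
  next
    case (inv h)
    then have h: "h \<in> P" "iv h \<cdot> D \<in> P" using simpleP simpleD by (auto simp: le_def)
    have hc: "h \<in> carrier G" using h PGe by auto
    have "D \<cdot> iv h = D \<cdot> (iv h \<cdot> D) \<cdot> iv D" using hc by (simp add: m_assoc)
    then have "D \<cdot> iv h \<in> P" using conjD2[OF h(2)] by simp
    moreover have "iv (iv h) \<cdot> D \<in> P" using hc P_mult[OF h(1) DP] by simp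
    ultimately show ?case using hc by (intro exI[of _ 1]) simp
  next
    case (eng h1 h2)
    then obtain n1 n2 where n1: "Dn n1 \<cdot> h1 \<in> P" "iv h1 \<cdot> Dn n1 \<in> P"
      and n2: "Dn n2 \<cdot> h2 \<in> P" "iv h2 \<cdot> Dn n2 \<in> P" by blast
    have c: "h1 \<in> carrier G" "h2 \<in> carrier G" using eng.hyps gen by auto
    have p1: "Dn (n1+n2) = Dn n2 \<cdot> Dn n1" by (simp add: nat_pow_mult add.commute)
    have p2: "Dn (n1+n2) = Dn n1 \<cdot> Dn n2" by (simp add: nat_pow_mult)
    have "Dn (n1+n2) \<cdot> (h1 \<cdot> h2) = (Dn n2 \<cdot> (Dn n1 \<cdot> h1) \<cdot> iv (Dn n2)) \<cdot> (Dn n2 \<cdot> h2)"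
      using c by (simp add: p1 m_assoc)
    then have A: "Dn (n1+n2) \<cdot> (h1 \<cdot> h2) \<in> P" using conjDn[OF n1(1), of n2] P_mult n2(1) by simp
    have "iv (h1 \<cdot> h2) \<cdot> Dn (n1+n2) = (iv h2 \<cdot> Dn n2) \<cdot> (iv (Dn n2) \<cdot> (iv h1 \<cdot> Dn n1) \<cdot> Dn n2)"
      using c by (simp add: p2 m_assoc inv_mult_group)
    then have B: "iv (h1 \<cdot> h2) \<cdot> Dn (n1+n2) \<in> P" using conjDn[OF n1(2), of n2] P_mult n2(2) by simp
    show ?case using A B by blast
  qed
qed

lemma powk_le: "q \<le> q' \<Longrightarrow> Dk q \<preceq> Dk q'"
proof -
  assume "q \<le> q'"
  have e: "Dk (-q + q') = iv (Dk q) \<cdot> Dk q'" using int_pow_mult[of D "-q" q'] int_pow_neg[of D q] by simp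
  have "-q + q' = q' - q" by simp
  then have "iv (Dk q) \<cdot> Dk q' = Dk (q' - q)" using e by simp
  also have "\<dots> = Dn (nat (q' - q))" using \<open>q \<le> q'\<close> by (intro Dk_nonneg) simp
  finally show ?thesis using Dpow_P by (simp add: le_def)
qed

lemma powk_le_rev: "D \<noteq> e \<Longrightarrow> Dk q \<preceq> Dk q' \<Longrightarrow> q \<le> q'"
proof (rule ccontr)
  assume ne: "D \<noteq> e" and le: "Dk q \<preceq> Dk q'" and "\<not> q \<le> q'"
  define n where "n = nat (q - q')"
  have n0: "n > 0" using \<open>\<not> q \<le> q'\<close> by (simp add: n_def)
  have e: "Dk (-q + q') = iv (Dk q) \<cdot> Dk q'" using int_pow_mult[of D "-q" q'] int_pow_neg[of D q] by simp
  have "-q + q' = -(q - q')" by simp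
  then have "iv (Dk q) \<cdot> Dk q' = Dk (-(q - q'))" using e by simp
  also have "\<dots> = iv (Dk (q - q'))" by (rule int_pow_neg) simp
  also have "\<dots> = iv (Dn n)" using \<open>\<not> q \<le> q'\<close> Dk_nonneg[of "q - q'"] by (simp add: n_def)
  finally have "iv (Dn n) \<in> P" using le by (simp add: le_def)
  then have "Dn n = e" using P_unit Dpow_P by blast
  moreover obtain m where "n = Suc m" using n0 by (cases n) auto
  moreover have "D \<cdot> Dn m = Dn (Suc m)" by (rule nat_pow_Suc2[symmetric]) simp
  ultimately have "D \<cdot> Dn m = e" by simp
  then have "D \<preceq> e" using le_mult_P[of D "Dn m"] Dpow_P by simp
  then show False using ne le_one_P DP by blast
qed

lemma inf_ex: "D \<noteq> e \<Longrightarrow> X \<in> carrier G \<Longrightarrow> \<exists>p. Dk p \<preceq> X \<and> (\<forall>q. Dk q \<preceq> X \<longrightarrow> q \<le> p)"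
proof -
  assume ne: "D \<noteq> e" and X: "X \<in> carrier G"
  obtain n where n: "Dn n \<cdot> X \<in> P" "iv X \<cdot> Dn n \<in> P" using bounds[OF X] by blast
  have lo: "Dk (- int n) \<preceq> X" using n X by (simp add: le_def int_pow_neg_int)
  have hi: "X \<preceq> Dk (int n)" using n X by (simp add: le_def int_pow_int)
  have bnd: "q \<le> int n" if "Dk q \<preceq> X" for q
    using powk_le_rev[OF ne le_trans[OF that hi]] .
  define S where "S = {q. Dk q \<preceq> X \<and> - int n \<le> q}"
  have fin: "finite S" by (rule finite_subset[of _ "{- int n .. int n}"]) (auto simp: S_def bnd)
  have ne2: "- int n \<in> S" using lo by (simp add: S_def)
  define p where "p = Max S"
  have "p \<in> S" unfolding p_def using fin ne2 by (intro Max_in) auto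
  moreover have "q \<le> p" if "Dk q \<preceq> X" for q
  proof (cases "- int n \<le> q")
    case True then have "q \<in> S" using that by (simp add: S_def)
    then show ?thesis using fin by (simp add: p_def)
  next
    case False then show ?thesis using Max_ge[OF fin ne2] by (simp add: p_def)
  qed
  ultimately show ?thesis by (auto simp: S_def)
qed

lemma nontriv_key: "b \<in> P \<Longrightarrow> b \<preceq> Dn n \<Longrightarrow> (\<forall>u. smp u \<and> u \<preceq> b \<longrightarrow> u = e) \<Longrightarrow> b = e"
proof (induction n arbitrary: b)
  case 0 then show ?case using le_one_P by simp
next
  case (Suc k)
  have bc: "b \<in> carrier G" using Suc.prems PGe by auto
  have bD: "b = e" if "b \<preceq> D" using Suc.prems(1,3) simpleI[of b] that le_refl[OF bc] by blast
  show ?case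
  proof (cases "k = 0")
    case True then show ?thesis using Suc.prems bD by simp
  next
    case False
    obtain m where m: "m \<preceq> b" "m \<preceq> Dn k" "\<forall>c. c \<preceq> b \<and> c \<preceq> Dn k \<longrightarrow> c \<preceq> m"
      using meet_ex[of b "Dn k"] bc by auto
    have "e \<preceq> m" using m(3) Suc.prems(1) Dpow_P P_iff by blast
    then have mP: "m \<in> P" by (simp add: P_iff)
    have "\<forall>u. smp u \<and> u \<preceq> m \<longrightarrow> u = e" using Suc.prems(3) m(1) le_trans by blast
    then have me: "m = e" using Suc.IH mP m(2) by blast
    define c where "c = b \<cdot> iv D"
    have cc: "c \<in> carrier G" using bc by (simp add: c_def)
    have "iv c \<cdot> b = D" using bc by (simp add: c_def inv_mult_group m_assoc)
    then have c1: "c \<preceq> b" using cc bc DP by (simp add: le_def)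
    have "iv c \<cdot> Dn k = D \<cdot> (iv b \<cdot> Dn (Suc k)) \<cdot> iv D" using bc by (simp add: c_def inv_mult_group m_assoc)
    moreover have "iv b \<cdot> Dn (Suc k) \<in> P" using Suc.prems(2) by (simp add: le_def)
    ultimately have "iv c \<cdot> Dn k \<in> P" using conjD2 by simp
    then have c2: "c \<preceq> Dn k" using cc by (simp add: le_def)
    have "c \<preceq> e" using m(3) c1 c2 me by blast
    then have "D \<cdot> iv b \<in> P" using bc by (simp add: le_def c_def inv_mult_group)
    then have "iv D \<cdot> (D \<cdot> iv b) \<cdot> D \<in> P" by (rule conjD1)
    then have "iv b \<cdot> D \<in> P" using bc by simp
    then show ?thesis using bD bc by (simp add: le_def)
  qed
qed

lemma nontriv: "b \<in> P \<Longrightarrow> b \<noteq> e \<Longrightarrow> \<exists>u. smp u \<and> u \<noteq> e \<and> u \<preceq> b"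
proof -
  assume b: "b \<in> P" "b \<noteq> e"
  obtain n where "iv b \<cdot> Dn n \<in> P" using bounds[of b] b PGe by blast
  then have "b \<preceq> Dn n" using b PGe by (simp add: le_def)
  then show ?thesis using nontriv_key b by blast
qed

lemma lprod_Nil[simp]: "lprod G [] = e" by (simp add: lprod_def)
lemma lprod_Cons[simp]: "lprod G (x # xs) = x \<cdot> lprod G xs" by (simp add: lprod_def)
lemma lprod_P: "set xs \<subseteq> P \<Longrightarrow> lprod G xs \<in> P"
  by (induction xs) (auto simp: one_P P_mult)

definition mu where "mu Y = Max {length xs | xs. set xs \<subseteq> P - {e} \<and> lprod G xs = Y}"

lemma mu_less: "Y' \<in> P \<Longrightarrow> x \<in> P \<Longrightarrow> x \<noteq> e \<Longrightarrow> mu Y' < mu (x \<cdot> Y')"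
proof -
  assume Y': "Y' \<in> P" and x: "x \<in> P" "x \<noteq> e"
  define L where "L Z = {length xs | xs. set xs \<subseteq> P - {e} \<and> lprod G xs = Z}" for Z
  have muL: "mu Z = Max (L Z)" for Z by (simp add: mu_def L_def)
  have fin: "finite (L Z)" if Z: "Z \<in> P" for Z
  proof -
    obtain N where N: "\<forall>xs. set xs \<subseteq> P - {e} \<and> lprod G xs = Z \<longrightarrow> length xs \<le> N"
      using atomic[OF Z] by blast
    have "L Z \<subseteq> {..N}"
    proof
      fix k assume "k \<in> L Z"
      then obtain xs where "k = length xs" "set xs \<subseteq> P - {e}" "lprod G xs = Z" unfolding L_def by blast
      then show "k \<in> {..N}" using N by simp
    qed
    then show ?thesis using finite_subset by blast
  qed
  have ne: "L Y' \<noteq> {}"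
  proof (cases "Y' = e")
    case True
    have "length [] \<in> L Y'" unfolding L_def mem_Collect_eq
      by (rule exI[of _ "[]"]) (use True in simp)
    then show ?thesis by blast
  next
    case False
    have "length [Y'] \<in> L Y'" unfolding L_def mem_Collect_eq
      by (rule exI[of _ "[Y']"]) (use False Y' PGe in simp)
    then show ?thesis by blast
  qed
  have "Max (L Y') \<in> L Y'" using fin[OF Y'] ne by (rule Max_in)
  then obtain xs where xs: "set xs \<subseteq> P - {e}" "lprod G xs = Y'" "length xs = mu Y'"
    unfolding L_def muL by auto
  have "length (x # xs) \<in> L (x \<cdot> Y')" unfolding L_def mem_Collect_eq
    by (rule exI[of _ "x # xs"]) (use xs x in simp)
  moreover have "x \<cdot> Y' \<in> P" using P_mult x Y' by simp
  ultimately have "length (x # xs) \<le> Max (L (x \<cdot> Y'))" using fin by (intro Max_ge) auto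
  then show ?thesis using xs(3) muL by simp
qed

definition greedy where "greedy xs \<longleftrightarrow> (\<forall>i<length xs. xs!i \<noteq> e \<and> smp (xs!i) \<and> xs!i \<preceq> lprod G (drop i xs) \<and>
   (\<forall>u. smp u \<and> u \<preceq> lprod G (drop i xs) \<longrightarrow> u \<preceq> xs!i))"

lemma greedy_Nil[simp]: "greedy []" by (simp add: greedy_def)

lemma greedy_Cons: "greedy (x # xs) \<longleftrightarrow> (x \<noteq> e \<and> smp x \<and> x \<preceq> x \<cdot> lprod G xs \<and>
   (\<forall>u. smp u \<and> u \<preceq> x \<cdot> lprod G xs \<longrightarrow> u \<preceq> x)) \<and> greedy xs"
  unfolding greedy_def by (simp add: All_less_Suc2)

lemma greedy_P: "greedy xs \<Longrightarrow> set xs \<subseteq> P"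
  by (induction xs) (auto simp: greedy_Cons simpleP)

lemma greedy_ex: "Y \<in> P \<Longrightarrow> \<exists>xs. lprod G xs = Y \<and> greedy xs"
proof (induction "mu Y" arbitrary: Y rule: less_induct)
  case less
  show ?case
  proof (cases "Y = e")
    case True then show ?thesis by (intro exI[of _ "[]"]) simp
  next
    case False
    have Yc: "Y \<in> carrier G" using less.prems PGe by auto
    obtain x where x: "x \<preceq> Y" "x \<preceq> D" "\<forall>c. c \<preceq> Y \<and> c \<preceq> D \<longrightarrow> c \<preceq> x"
      using meet_ex[of Y D] Yc by auto
    have "e \<preceq> x" using x(3) less.prems DP P_iff by blast
    then have xP: "x \<in> P" by (simp add: P_iff)
    have xs: "smp x" using xP x(2) by (rule simpleI)
    have xc: "x \<in> carrier G" using xP PGe by auto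
    have xne: "x \<noteq> e"
    proof
      assume "x = e"
      obtain u where u: "smp u" "u \<noteq> e" "u \<preceq> Y" using nontriv less.prems False by blast
      then have "u \<preceq> x" using x(3) simpleD by blast
      then show False using u \<open>x = e\<close> le_one_P simpleP by blast
    qed
    define Y' where "Y' = iv x \<cdot> Y"
    have Y'P: "Y' \<in> P" using x(1) by (simp add: le_def Y'_def)
    have YY: "Y = x \<cdot> Y'" using xc Yc by (simp add: Y'_def)
    have "mu Y' < mu Y" using mu_less[OF Y'P xP xne] YY by simp
    then obtain xs where xs': "lprod G xs = Y'" "greedy xs" using less.hyps Y'P by blast
    have "greedy (x # xs)" unfolding greedy_Cons using xs' xne xs x simpleD YY by auto
    moreover have "lprod G (x # xs) = Y" using xs' YY by simp
    ultimately show ?thesis by blast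
  qed
qed

lemma greedy_unique: "greedy xs \<Longrightarrow> greedy ys \<Longrightarrow> lprod G xs = lprod G ys \<Longrightarrow> xs = ys"
proof (induction xs arbitrary: ys)
  case Nil
  show ?case
  proof (cases ys)
    case (Cons y ys')
    then have "y \<preceq> e" "y \<in> P" "y \<noteq> e" using Nil greedy_Cons[of y ys'] simpleP by auto
    then show ?thesis using le_one_P by blast
  qed simp
next
  case (Cons x xs)
  show ?case
  proof (cases ys)
    case Nil
    then have "x \<preceq> e" "x \<in> P" "x \<noteq> e" using Cons.prems greedy_Cons[of x xs] simpleP by auto
    then show ?thesis using le_one_P by blast
  next
    case (Cons y ys')
    have gx: "x \<noteq> e \<and> smp x \<and> x \<preceq> x \<cdot> lprod G xs \<and> (\<forall>u. smp u \<and> u \<preceq> x \<cdot> lprod G xs \<longrightarrow> u \<preceq> x)" "greedy xs"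
      using Cons.prems(1) greedy_Cons by auto
    have gy: "y \<noteq> e \<and> smp y \<and> y \<preceq> y \<cdot> lprod G ys' \<and> (\<forall>u. smp u \<and> u \<preceq> y \<cdot> lprod G ys' \<longrightarrow> u \<preceq> y)" "greedy ys'"
      using Cons.prems(2) greedy_Cons Cons by auto
    have eq: "x \<cdot> lprod G xs = y \<cdot> lprod G ys'" using Cons.prems(3) Cons by simp
    have "x \<preceq> y" using gx gy eq by metis
    moreover have "y \<preceq> x" using gx gy eq by metis
    ultimately have xy: "x = y" by (rule le_antisym)
    have c: "x \<in> carrier G" "lprod G xs \<in> carrier G" "lprod G ys' \<in> carrier G"
      using gx gy greedy_P lprod_P simpleP PGe by auto
    have "lprod G xs = lprod G ys'" using lcancel[OF c] eq xy by simp
    then have "xs = ys'" using Cons.IH gx(2) gy(2) by blast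
    then show ?thesis using xy Cons by simp
  qed
qed

lemma lnf_iff: "lnf G P D X p xs \<longleftrightarrow> X = Dk p \<cdot> lprod G xs \<and> Dk p \<preceq> X \<and> (\<forall>q. Dk q \<preceq> X \<longrightarrow> q \<le> p) \<and> greedy xs"
  by (simp add: lnf_def greedy_def)

lemma lnf_ex: "D \<noteq> e \<Longrightarrow> X \<in> carrier G \<Longrightarrow> \<exists>p xs. lnf G P D X p xs"
proof -
  assume ne: "D \<noteq> e" and X: "X \<in> carrier G"
  obtain p where p: "Dk p \<preceq> X" "\<forall>q. Dk q \<preceq> X \<longrightarrow> q \<le> p" using inf_ex[OF ne X] by blast
  have "iv (Dk p) \<cdot> X \<in> P" using p(1) by (simp add: le_def)
  then obtain xs where xs: "lprod G xs = iv (Dk p) \<cdot> X" "greedy xs" using greedy_ex by blast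
  have "X = Dk p \<cdot> lprod G xs" using xs X by simp
  then show ?thesis using p xs unfolding lnf_iff by blast
qed

lemma lnf_uniq: "D \<noteq> e \<Longrightarrow> lnf G P D X p xs \<Longrightarrow> lnf G P D X p' xs' \<Longrightarrow> p = p' \<and> xs = xs'"
proof -
  assume ne: "D \<noteq> e" and A: "lnf G P D X p xs" and B: "lnf G P D X p' xs'"
  have pp: "p = p'" using A B unfolding lnf_iff by (meson order_antisym)
  have c: "X \<in> carrier G" "lprod G xs \<in> carrier G" "lprod G xs' \<in> carrier G"
    using A B unfolding lnf_iff using greedy_P lprod_P PGe by (auto simp: le_def)
  have "lprod G xs = lprod G xs'" using A B pp c unfolding lnf_iff by (metis int_pow_closed DG lcancel)
  then show ?thesis using A B pp greedy_unique unfolding lnf_iff by blast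
qed

lemma nf_lnf: "D \<noteq> e \<Longrightarrow> X \<in> carrier G \<Longrightarrow> lnf G P D X (ginf G P D X) (snd (nf G P D X))"
proof -
  assume ne: "D \<noteq> e" and X: "X \<in> carrier G"
  have ex1: "\<exists>!z. (case z of (p, xs) \<Rightarrow> lnf G P D X p xs)"
  proof -
    obtain p xs where "lnf G P D X p xs" using lnf_ex[OF ne X] by blast
    then show ?thesis using lnf_uniq[OF ne] by (intro ex1I[of _ "(p, xs)"]) auto
  qed
  have "case nf G P D X of (p, xs) \<Rightarrow> lnf G P D X p xs" unfolding nf_def by (rule theI'[OF ex1])
  then show ?thesis by (cases "nf G P D X") (simp add: ginf_def)
qed

lemma le_conjk: "a \<preceq> b \<Longrightarrow> iv (Dk k) \<cdot> a \<cdot> Dk k \<preceq> iv (Dk k) \<cdot> b \<cdot> Dk k"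
proof -
  assume ab: "a \<preceq> b"
  then have c: "a \<in> carrier G" "b \<in> carrier G" by (auto simp: le_def)
  have "iv (iv (Dk k) \<cdot> a \<cdot> Dk k) \<cdot> (iv (Dk k) \<cdot> b \<cdot> Dk k) = iv (Dk k) \<cdot> (iv a \<cdot> b) \<cdot> Dk k"
    using c by (simp add: inv_mult_group m_assoc)
  then show ?thesis using conjDk[of "iv a \<cdot> b" k] ab c by (simp add: le_def)
qed

lemma chain: "greedy xs \<Longrightarrow> xs \<noteq> [] \<Longrightarrow> s \<in> P \<Longrightarrow> (\<forall>u. smp u \<and> u \<preceq> last xs \<cdot> s \<longrightarrow> u \<preceq> last xs)
   \<Longrightarrow> smp u \<Longrightarrow> u \<preceq> lprod G xs \<cdot> s \<Longrightarrow> u \<preceq> hd xs"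
proof (induction xs arbitrary: u)
  case Nil then show ?case by simp
next
  case (Cons x xs)
  have gx: "x \<noteq> e" "smp x" "\<forall>u. smp u \<and> u \<preceq> x \<cdot> lprod G xs \<longrightarrow> u \<preceq> x" "greedy xs"
    using Cons.prems(1) greedy_Cons by auto
  have xc: "x \<in> carrier G" using gx simpleP PGe by auto
  have LP: "lprod G xs \<in> P" using gx greedy_P lprod_P by auto
  have sc: "s \<in> carrier G" using Cons.prems PGe by auto
  have Lc: "lprod G xs \<in> carrier G" using LP PGe by auto
  show ?case
  proof (cases "xs = []")
    case True then show ?thesis using Cons.prems xc by simp
  next
    case False
    have IH: "\<forall>v. smp v \<and> v \<preceq> lprod G xs \<cdot> s \<longrightarrow> v \<preceq> hd xs"
      using Cons.IH gx(4) False Cons.prems(3,4) by simp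
    define Z where "Z = lprod G xs \<cdot> s"
    have ZP: "Z \<in> P" using LP Cons.prems(3) P_mult by (simp add: Z_def)
    have Zc: "Z \<in> carrier G" using ZP PGe by auto
    obtain m where m: "m \<preceq> Z" "m \<preceq> D" "\<forall>c. c \<preceq> Z \<and> c \<preceq> D \<longrightarrow> c \<preceq> m"
      using meet_ex[of Z D] Zc by auto
    have "e \<preceq> m" using m(3) ZP DP P_iff by blast
    then have "smp m" using m(2) by (simp add: P_iff simpleI)
    then have mh: "m \<preceq> hd xs" using IH m(1) by (simp add: Z_def)
    have "hd xs \<preceq> lprod G xs" using gx(4) False unfolding greedy_def
      by (metis drop0 hd_conv_nth length_greater_0_conv)
    then have hL: "m \<preceq> lprod G xs" using mh le_trans by blast
    have u1: "u \<preceq> x \<cdot> Z" using Cons.prems(6) xc Lc sc by (simp add: Z_def m_assoc)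
    have "iv D \<cdot> (x \<cdot> D) \<in> P" using conjD1[of x] gx simpleP xc by (simp add: m_assoc)
    then have "D \<preceq> x \<cdot> D" using xc by (simp add: le_def)
    then have u2: "u \<preceq> x \<cdot> D" using Cons.prems(5) simpleD le_trans by blast
    have uc: "u \<in> carrier G" using Cons.prems(5) simpleP PGe by auto
    have "iv x \<cdot> u \<preceq> Z" using le_lmult[OF u1, of "iv x"] xc Zc by simp
    moreover have "iv x \<cdot> u \<preceq> D" using le_lmult[OF u2, of "iv x"] xc by simp
    ultimately have "iv x \<cdot> u \<preceq> m" using m(3) by blast
    then have "u \<preceq> x \<cdot> m" using le_lmult[of "iv x \<cdot> u" m x] xc uc by simp
    moreover have "x \<cdot> m \<preceq> x \<cdot> lprod G xs" using le_lmult[OF hL xc] .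
    ultimately have "u \<preceq> x \<cdot> lprod G xs" using le_trans by blast
    then show ?thesis using gx(3) Cons.prems(5) by simp
  qed
qed

lemma main_local:
  assumes X: "X \<in> carrier G" and U: "X \<in> USS G P D X" and cl: "clen G P D X > 0"
    and ms: "minimal_simple G P D X X s" and lw0: "left_weighted G P D (phi G P D X) s"
  shows "s \<preceq> iota G P D X"
proof -
  define f where "f = phi G P D X"
  have sf: "smp f" "smp s" and lw: "lnf G P D (f \<cdot> s) 0 [f, s]"
    using lw0 by (simp_all add: left_weighted_def f_def)
  have sc: "s \<in> carrier G" "s \<in> P" using sf simpleP PGe by auto
  have fc: "f \<in> carrier G" "f \<in> P" using sf simpleP PGe by auto
  have "\<forall>i<length [f, s]. [f,s]!i \<noteq> e \<and> smp ([f,s]!i) \<and> [f,s]!i \<preceq> lprod G (drop i [f,s]) \<and>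
        (\<forall>u. smp u \<and> u \<preceq> lprod G (drop i [f,s]) \<longrightarrow> u \<preceq> [f,s]!i)"
    using lw unfolding lnf_def by blast
  then have "f \<noteq> e" and fmax: "\<forall>u. smp u \<and> u \<preceq> f \<cdot> s \<longrightarrow> u \<preceq> f"
    using sc fc by (auto dest: spec[of _ 0])
  have Dne: "D \<noteq> e"
  proof
    assume "D = e"
    then have "f \<preceq> e" using sf simpleD by simp
    then show False using \<open>f \<noteq> e\<close> le_one_P fc by blast
  qed
  define p where "p = ginf G P D X"
  define xs where "xs = snd (nf G P D X)"
  have L: "lnf G P D X p xs" using nf_lnf[OF Dne X] by (simp add: p_def xs_def)
  then have XL: "X = Dk p \<cdot> lprod G xs" and gxs: "greedy xs" unfolding lnf_iff by auto
  have xsne: "xs \<noteq> []" using cl by (simp add: clen_def xs_def)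
  have flast: "f = last xs" by (simp add: f_def phi_def xs_def)
  have iota: "iota G P D X = iv (Dk (-p)) \<cdot> hd xs \<cdot> Dk (-p)"
    by (simp add: iota_def tau_pow_def p_def xs_def)
  have Lc: "lprod G xs \<in> carrier G" using gxs greedy_P lprod_P PGe by auto
  define X' where "X' = conj G X s"
  have X'e: "X' = iv s \<cdot> X \<cdot> s" by (simp add: X'_def conj_def)
  have X'c: "X' \<in> carrier G" using X sc by (simp add: X'e)
  have "X' \<in> SSS G P D X" using ms by (simp add: minimal_simple_def USS_def X'_def)
  moreover have "X \<in> conj_class G X" unfolding conj_class_def conj_def using X
    by (intro CollectI exI[of _ e]) simp
  ultimately have pp: "p \<le> ginf G P D X'" unfolding SSS_def p_def by blast
  have "Dk (ginf G P D X') \<preceq> X'" using nf_lnf[OF Dne X'c] unfolding lnf_iff by blast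
  then have "Dk p \<preceq> X'" using powk_le[OF pp] le_trans by blast
  then have A: "s \<cdot> Dk p \<preceq> s \<cdot> X'" using le_lmult sc by blast
  define t where "t = iv (Dk p) \<cdot> s \<cdot> Dk p"
  have tP: "t \<in> P" using conjDk[OF sc(2)] by (simp add: t_def)
  have tc: "t \<in> carrier G" using tP PGe by auto
  have e1: "s \<cdot> Dk p = Dk p \<cdot> t" using sc by (simp add: t_def m_assoc)
  have e2a: "s \<cdot> X' = X \<cdot> s" using sc X by (simp add: X'e m_assoc)
  have e2b: "X \<cdot> s = Dk p \<cdot> (lprod G xs \<cdot> s)" using sc Lc by (subst XL) (simp add: m_assoc)
  have e2: "s \<cdot> X' = Dk p \<cdot> (lprod G xs \<cdot> s)" using e2a e2b by simp
  have tle: "t \<preceq> lprod G xs \<cdot> s" using A e1 e2 le_lmult_iff[of t "lprod G xs \<cdot> s" "Dk p"] tc sc Lc by simp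
  have comm: "Dk p \<cdot> D = D \<cdot> Dk p"
    using int_pow_mult[of D p 1] int_pow_mult[of D 1 p] by (simp add: add.commute)
  have "iv t \<cdot> D = iv (Dk p) \<cdot> (iv s \<cdot> D) \<cdot> Dk p"
    using sc by (simp add: t_def inv_mult_group m_assoc comm)
  moreover have "iv s \<cdot> D \<in> P" using sf simpleD by (simp add: le_def)
  ultimately have "iv t \<cdot> D \<in> P" using conjDk by simp
  then have "smp t" using tP tc by (simp add: simpleI le_def)
  then have th: "t \<preceq> hd xs" using chain[OF gxs xsne sc(2) _ _ tle] fmax flast by blast
  have "iv (Dk (-p)) \<cdot> t \<cdot> Dk (-p) \<preceq> iota G P D X" using le_conjk[OF th, of "-p"] iota by simp
  moreover have "iv (Dk (-p)) \<cdot> t \<cdot> Dk (-p) = s" using sc by (simp add: t_def int_pow_neg m_assoc)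
  ultimately show ?thesis by simp
qed

end

lemma GS_I: "garside G P D \<Longrightarrow> GS G P D"
proof -
  assume g: "garside G P D"
  have "group G" using g unfolding garside_def by (elim conjE) assumption
  then show ?thesis using g by (intro GS.intro) (simp_all add: GS_axioms_def)
qed

theorem mainTheorem2:
  fixes G :: "('a,'b) monoid_scheme" and P :: "'a set" and D X s :: 'a
  assumes "garside G P D"
    and "X \<in> carrier G"
    and "X \<in> USS G P D X"
    and "clen G P D X > 0"
    and "minimal_simple G P D X X s"
    and "left_weighted G P D (phi G P D X) s"
  shows "gprec G P s (iota G P D X)"
  using GS.main_local[OF GS_I[OF assms(1)] assms(2-6)] .

end
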